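(* Let $K\subset\mathbb R^d$ be compact and let $\Delta$ be a family of Borel probability measures supported in $K$ having uniform densities. Suppose $t\in\mathbb R$ is such that for every $x\in K$ there is $\mu_x\in\Delta$ with $$\liminf_{r\to0}\frac{\log\mu_x(B(x,r))}{\log r}\le t.$$ Then $\dim_{\mathrm H}K\le t$.
   Context: Definition: for a compact set $K\subset\mathbb R^d$, a set $\Delta$ of Borel probability measures each supported in $K$ has uniform densities if for every $\epsilon>0$ there exist a set $\mathcal E$ of Borel measures on $\mathbb R^d$ with $\sum_{\nu\in\mathcal E}\nu(\mathbb R^d)<\infty$ and a constant $\eta>0$ such that for all $\mu\in\Delta$, $r\in(0,\eta)$ and $x\in K$ there is $\nu\in\mathcal E$ with $\frac{\log\nu(B(x,r))}{\log r}\le\frac{\log\mu(B(x,r))}{\log r}+\epsilon$ (equivalently $r^\epsilon\mu(B(x,r))\le\nu(B(x,r))$). *)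

theory Defs
  imports "HOL-Probability.Probability"
begin

definition borel_prob_supported_in :: "'a::euclidean_space set \<Rightarrow> 'a measure \<Rightarrow> bool" where
  "borel_prob_supported_in K \<mu> \<longleftrightarrow>
     sets \<mu> = sets borel \<and> prob_space \<mu> \<and> emeasure \<mu> (UNIV - K) = 0"

text \<open>Uniform densities (equivalent multiplicative form of the definition).
  The total mass of the (possibly infinite) family E is the supremum of its finite partial sums.\<close>
definition uniform_densities :: "'a::euclidean_space set \<Rightarrow> 'a measure set \<Rightarrow> bool" where
  "uniform_densities K \<Delta> \<longleftrightarrow>
     (\<forall>\<mu>\<in>\<Delta>. borel_prob_supported_in K \<mu>) \<and>
     (\<forall>\<epsilon>>0. \<exists>E :: 'a measure set. \<exists>\<eta>>0.
        (\<forall>\<nu>\<in>E. sets \<nu> = sets borel) \<and>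
        (SUP F\<in>{F. finite F \<and> F \<subseteq> E}. \<Sum>\<nu>\<in>F. emeasure \<nu> UNIV) < \<infinity> \<and>
        (\<forall>\<mu>\<in>\<Delta>. \<forall>r. 0 < r \<and> r < \<eta> \<longrightarrow> (\<forall>x\<in>K. \<exists>\<nu>\<in>E.
            ennreal (r powr \<epsilon>) * emeasure \<mu> (ball x r) \<le> emeasure \<nu> (ball x r))))"

text \<open>Lower local dimension: liminf as r \<rightarrow> 0+ of log mu(B(x,r)) / log r,
  with the convention log 0 / log r = +\<infinity> (for 0<r<1).\<close>
definition lower_local_dim :: "'a::euclidean_space measure \<Rightarrow> 'a \<Rightarrow> ereal" where
  "lower_local_dim \<mu> x = Liminf (at_right 0)
     (\<lambda>r. if measure \<mu> (ball x r) = 0 then \<infinity>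
          else ereal (ln (measure \<mu> (ball x r)) / ln r))"

definition hausdorff_pre :: "real \<Rightarrow> real \<Rightarrow> 'a::metric_space set \<Rightarrow> ennreal" where
  "hausdorff_pre s \<delta> A = (INF U\<in>{U :: nat \<Rightarrow> 'a set. A \<subseteq> (\<Union>i. U i) \<and>
        (\<forall>i. bounded (U i) \<and> diameter (U i) \<le> \<delta>)}.
      (\<Sum>i. ennreal (diameter (U i) powr s)))"

definition hausdorff_measure :: "real \<Rightarrow> 'a::metric_space set \<Rightarrow> ennreal" where
  "hausdorff_measure s A = (SUP \<delta>\<in>{0<..}. hausdorff_pre s \<delta> A)"

definition hausdorff_dim :: "'a::metric_space set \<Rightarrow> ereal" where
  "hausdorff_dim A = Inf {ereal s | s. 0 \<le> s \<and> hausdorff_measure s A = 0}"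

end

theory Submission
  imports Defs
begin


lemma cover_bound:
  fixes K :: "'a::euclidean_space set" and C :: "'a set"
  assumes "finite C" and "\<And>x. x \<in> C \<Longrightarrow> 0 < r x \<and> 10 * r x \<le> \<delta>"
    and "K \<subseteq> (\<Union>x\<in>C. ball x (5 * r x))" and "0 \<le> \<delta>"
  shows "hausdorff_pre s \<delta> K \<le> (\<Sum>x\<in>C. ennreal ((10 * r x) powr s))"
proof -
  obtain h where h: "bij_betw h {0..<card C} C" using ex_bij_betw_nat_finite[OF assms(1)] by blast
  define U where "U i = (if i < card C then ball (h i) (5 * r (h i)) else {})" for i
  have cov: "K \<subseteq> (\<Union>i. U i)"
  proof
    fix y assume "y \<in> K"
    then obtain x where x: "x \<in> C" "y \<in> ball x (5 * r x)" using assms(3) by blast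
    then obtain i where "i \<in> {0..<card C}" "h i = x" using h by (metis bij_betw_iff_bijections)
    then show "y \<in> (\<Union>i. U i)" using x by (auto simp: U_def)
  qed
  have pr: "\<forall>i. bounded (U i) \<and> diameter (U i) \<le> \<delta>"
  proof
    fix i show "bounded (U i) \<and> diameter (U i) \<le> \<delta>"
    proof (cases "i < card C")
      case True
      then have "h i \<in> C" using h by (auto simp: bij_betw_def)
      then show ?thesis using True assms(2)[of "h i"] by (auto simp: U_def)
    next
      case False
      show ?thesis using False assms(4) by (auto simp: U_def diameter_def)
    qed
  qed
  have "hausdorff_pre s \<delta> K \<le> (\<Sum>i. ennreal (diameter (U i) powr s))"
    unfolding hausdorff_pre_def using cov pr by (intro INF_lower) auto
  also have "(\<Sum>i. ennreal (diameter (U i) powr s)) = (\<Sum>i\<in>{0..<card C}. ennreal (diameter (U i) powr s))"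
    by (rule suminf_finite) (auto simp: U_def diameter_def)
  also have "\<dots> = (\<Sum>i\<in>{0..<card C}. ennreal ((10 * r (h i)) powr s))"
  proof (rule sum.cong)
    fix i assume "i \<in> {0..<card C}"
    then have "h i \<in> C" "i < card C" using h by (auto simp: bij_betw_def)
    then show "ennreal (diameter (U i) powr s) = ennreal ((10 * r (h i)) powr s)"
      using assms(2)[of "h i"] by (auto simp: U_def)
  qed simp
  also have "\<dots> = (\<Sum>x\<in>C. ennreal ((10 * r x) powr s))"
    by (rule sum.reindex_bij_betw[OF h])
  finally show ?thesis .
qed

lemma group_bound:
  fixes C :: "'a::euclidean_space set"
  assumes "finite C" and nuE: "\<And>x. x \<in> C \<Longrightarrow> nu x \<in> E" and sE: "\<And>\<nu>. \<nu> \<in> E \<Longrightarrow> sets \<nu> = sets borel"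
    and pw: "pairwise (\<lambda>i j. disjnt (ball i (r i)) (ball j (r j))) C"
  shows "(\<Sum>x\<in>C. emeasure (nu x) (ball x (r x))) \<le> (SUP F\<in>{F. finite F \<and> F \<subseteq> E}. \<Sum>\<nu>\<in>F. emeasure \<nu> UNIV)"
proof -
  have "(\<Sum>x\<in>C. emeasure (nu x) (ball x (r x))) = (\<Sum>\<nu>\<in>nu ` C. \<Sum>x\<in>{x\<in>C. nu x = \<nu>}. emeasure (nu x) (ball x (r x)))"
    by (fact sum.image_gen[OF assms(1), where g=nu and h="\<lambda>x. emeasure (nu x) (ball x (r x))"])
  also have "\<dots> \<le> (\<Sum>\<nu>\<in>nu ` C. emeasure \<nu> UNIV)"
  proof (rule sum_mono)
    fix \<nu> assume "\<nu> \<in> nu ` C"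
    then obtain x0 where x0: "x0 \<in> C" "\<nu> = nu x0" by (rule imageE)
    have sb: "sets \<nu> = sets borel" unfolding x0(2) by (rule sE[OF nuE[OF x0(1)]])
    have "(\<Sum>x\<in>{x\<in>C. nu x = \<nu>}. emeasure (nu x) (ball x (r x))) = (\<Sum>x\<in>{x\<in>C. nu x = \<nu>}. emeasure \<nu> (ball x (r x)))"
      by (rule sum.cong) auto
    also have "\<dots> = emeasure \<nu> (\<Union>x\<in>{x\<in>C. nu x = \<nu>}. ball x (r x))"
    proof (rule sum_emeasure)
      show "(\<lambda>x. ball x (r x)) ` {x \<in> C. nu x = \<nu>} \<subseteq> sets \<nu>"
        unfolding sb by (auto intro: borel_open)
      show "disjoint_family_on (\<lambda>x. ball x (r x)) {x \<in> C. nu x = \<nu>}"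
        using pw unfolding disjoint_family_on_def pairwise_def disjnt_def by auto
          show "finite {x \<in> C. nu x = \<nu>}" using assms(1) by simp
    qed
    also have "\<dots> \<le> emeasure \<nu> UNIV"
      using emeasure_space[of \<nu>] sets_eq_imp_space_eq[OF sb] by simp
    finally show "(\<Sum>x\<in>{x\<in>C. nu x = \<nu>}. emeasure (nu x) (ball x (r x))) \<le> emeasure \<nu> UNIV" .
  qed
  also have "\<dots> \<le> (SUP F\<in>{F. finite F \<and> F \<subseteq> E}. \<Sum>\<nu>\<in>F. emeasure \<nu> UNIV)"
    by (rule SUP_upper) (use assms(1) nuE in blast)
  finally show ?thesis .
qed



lemma find_radius:
  fixes x :: "'a::euclidean_space"
  assumes sb: "sets \<mu> = sets borel" and ps: "prob_space \<mu>" and ld: "lower_local_dim \<mu> x \<le> ereal t"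
    and td: "t < d" and rho: "0 < \<rho>" "\<rho> \<le> 1"
  shows "\<exists>r. 0 < r \<and> r < \<rho> \<and> r powr d \<le> measure \<mu> (ball x r)"
proof -
  define f where "f r = (if measure \<mu> (ball x r) = 0 then \<infinity>
          else ereal (ln (measure \<mu> (ball x r)) / ln r))" for r :: real
  have "Liminf (at_right 0) f < ereal d" using ld td unfolding lower_local_dim_def f_def
    using le_less_trans[of _ "ereal t" "ereal d"] by simp
  then have "\<not> ereal d \<le> Liminf (at_right 0) f" by simp
  then obtain y where y: "y < ereal d" "\<not> eventually (\<lambda>r. y < f r) (at_right 0)"
    unfolding le_Liminf_iff by auto
  have ev: "eventually (\<lambda>r. 0 < r \<and> r < \<rho>) (at_right (0::real))"
    using eventually_at_right_real[OF rho(1)] by (rule eventually_mono) auto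
  have "\<not> eventually (\<lambda>r. (0 < r \<and> r < \<rho>) \<longrightarrow> y < f r) (at_right 0)"
    by (rule not_eventually_impI[OF ev y(2)])
  then obtain r where r: "0 < r" "r < \<rho>" "f r \<le> y" using not_eventuallyD by force
  then have fr: "f r < ereal d" using y(1) by simp
  then have m0: "measure \<mu> (ball x r) \<noteq> 0" unfolding f_def by (auto split: if_splits)
  then have mpos: "0 < measure \<mu> (ball x r)" by (simp add: zero_less_measure_iff)
  have q: "ln (measure \<mu> (ball x r)) / ln r < d" using fr m0 unfolding f_def by simp
  have lr: "ln r < 0" using r rho by simp
  have "d * ln r < ln (measure \<mu> (ball x r))" using q lr by (simp add: divide_less_eq mult.commute)
  then have "exp (d * ln r) < measure \<mu> (ball x r)"
    using mpos by (metis exp_less_cancel_iff exp_ln)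
  then have "r powr d \<le> measure \<mu> (ball x r)" using r by (simp add: powr_def)
  then show ?thesis using r by blast
qed

lemma lower_local_dim_nonneg:
  fixes x :: "'a::euclidean_space"
  assumes ps: "prob_space \<mu>"
  shows "0 \<le> lower_local_dim \<mu> x"
  unfolding lower_local_dim_def le_Liminf_iff
proof (intro allI impI)
  fix y :: ereal assume y: "y < 0"
  have "eventually (\<lambda>r. 0 < r \<and> r < 1) (at_right (0::real))"
    using eventually_at_right_real[of 0 "1::real"] by (rule eventually_mono) auto
  then show "\<forall>\<^sub>F r in at_right 0. y < (if measure \<mu> (ball x r) = 0 then \<infinity>
          else ereal (ln (measure \<mu> (ball x r)) / ln r))"
  proof (rule eventually_mono)
    fix r :: real assume r: "0 < r \<and> r < 1"
    show "y < (if measure \<mu> (ball x r) = 0 then \<infinity>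
          else ereal (ln (measure \<mu> (ball x r)) / ln r))"
    proof (cases "measure \<mu> (ball x r) = 0")
      case False
      then have "0 < measure \<mu> (ball x r)" by (simp add: zero_less_measure_iff)
      moreover have "measure \<mu> (ball x r) \<le> 1" using prob_space.prob_le_1[OF ps] by blast
      ultimately have "ln (measure \<mu> (ball x r)) \<le> 0" by simp
      moreover have "ln r < 0" using r by simp
      ultimately have "0 \<le> ln (measure \<mu> (ball x r)) / ln r" by (simp add: divide_nonpos_neg)
      then show ?thesis using False y by (simp add: less_le_trans)
    qed (use y in auto)
  qed
qed



lemma key:
  fixes K :: "'a::euclidean_space set" and \<Delta> :: "'a measure set" and t :: real
  assumes cK: "compact K"
    and ud: "uniform_densities K \<Delta>"
    and ld: "\<forall>x\<in>K. \<exists>\<mu>\<in>\<Delta>. lower_local_dim \<mu> x \<le> ereal t"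
    and ts: "t < s" and dpos: "0 < \<delta>" and cpos: "0 < c"
  shows "hausdorff_pre s \<delta> K \<le> ennreal c"
proof -
  define \<epsilon> where "\<epsilon> = (s - t) / 3"
  have epos: "0 < \<epsilon>" using ts by (simp add: \<epsilon>_def)
  have "\<exists>E :: 'a measure set. \<exists>\<eta>>0.
        (\<forall>\<nu>\<in>E. sets \<nu> = sets borel) \<and>
        (SUP F\<in>{F. finite F \<and> F \<subseteq> E}. \<Sum>\<nu>\<in>F. emeasure \<nu> UNIV) < \<infinity> \<and>
        (\<forall>\<mu>\<in>\<Delta>. \<forall>r. 0 < r \<and> r < \<eta> \<longrightarrow> (\<forall>x\<in>K. \<exists>\<nu>\<in>E.
            ennreal (r powr \<epsilon>) * emeasure \<mu> (ball x r) \<le> emeasure \<nu> (ball x r)))"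
    using conjunct2[OF ud[unfolded uniform_densities_def], rule_format, OF epos] .
  then obtain E \<eta> where eta: "\<eta> > 0" and sE: "\<forall>\<nu>\<in>E. sets \<nu> = sets borel"
    and Mfin: "(SUP F\<in>{F. finite F \<and> F \<subseteq> E}. \<Sum>\<nu>\<in>F. emeasure \<nu> UNIV) < \<infinity>"
    and dens: "\<forall>\<mu>\<in>\<Delta>. \<forall>r. 0 < r \<and> r < \<eta> \<longrightarrow> (\<forall>x\<in>K. \<exists>\<nu>\<in>E.
            ennreal (r powr \<epsilon>) * emeasure \<mu> (ball x r) \<le> emeasure \<nu> (ball x r))"
    by (elim exE conjE) (rule that)
  have bp: "\<forall>\<mu>\<in>\<Delta>. borel_prob_supported_in K \<mu>" using conjunct1[OF ud[unfolded uniform_densities_def]] .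
  define M where "M = (SUP F\<in>{F. finite F \<and> F \<subseteq> E}. \<Sum>\<nu>\<in>F. emeasure \<nu> UNIV)"
  define m where "m = enn2real M"
  have Mm: "M = ennreal m" "0 \<le> m" using Mfin unfolding M_def m_def
    by (auto simp: less_top[symmetric] ennreal_enn2real_if)
  define \<rho>0 where "\<rho>0 = (c / (10 powr s * (m + 1))) powr (1 / \<epsilon>)"
  define \<rho> where "\<rho> = min (min 1 (\<eta> / 2)) (min (\<delta> / 10) \<rho>0)"
  have q0: "0 < c / (10 powr s * (m + 1))" using cpos Mm by simp
  have q0': "c / (10 powr s * (m + 1)) \<noteq> 0" using q0 by linarith
  have rho0: "0 < \<rho>0" unfolding \<rho>0_def powr_gt_zero by (rule q0')
  have rho: "0 < \<rho>" "\<rho> \<le> 1" "\<rho> < \<eta>" "10 * \<rho> \<le> \<delta>" "\<rho> \<le> \<rho>0"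
    using rho0 eta dpos by (auto simp: \<rho>_def)
  have r1: "\<rho> powr \<epsilon> \<le> \<rho>0 powr \<epsilon>" using rho epos by (intro powr_mono2) auto
  have e1: "1 / \<epsilon> * \<epsilon> = 1" using epos by simp
  have r2: "\<rho>0 powr \<epsilon> = (c / (10 powr s * (m + 1))) powr (1 / \<epsilon> * \<epsilon>)"
    unfolding \<rho>0_def by (rule powr_powr)
  have r3: "(c / (10 powr s * (m + 1))) powr 1 = c / (10 powr s * (m + 1))"
    using q0 by (intro powr_one) simp
  have rpe: "\<rho> powr \<epsilon> \<le> c / (10 powr s * (m + 1))"
    using r1 unfolding r2 e1 r3 .
  define k where "k = 10 powr s * \<rho> powr \<epsilon>"
  have k0: "0 \<le> k" by (simp add: k_def)
  have km: "k * m \<le> c"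
  proof -
    have "k \<le> 10 powr s * (c / (10 powr s * (m + 1)))" unfolding k_def using rpe
      by (intro mult_left_mono) auto
    also have "\<dots> = c / (m + 1)" by simp
    finally have "k \<le> c / (m + 1)" .
    then have "k * m \<le> c / (m + 1) * m" using Mm(2) by (rule mult_right_mono)
    also have "\<dots> = c * (m / (m + 1))" by simp
    also have "\<dots> \<le> c * 1" using Mm(2) cpos by (intro mult_left_mono) auto
    finally show ?thesis by simp
  qed
  have ee: "s - \<epsilon> = \<epsilon> + (t + \<epsilon>)" unfolding \<epsilon>_def by (simp add: field_simps)
  have tl: "t < t + \<epsilon>" using epos by simp
  have pick: "\<forall>x\<in>K. \<exists>r \<nu>. 0 < r \<and> r < \<rho> \<and> \<nu> \<in> E \<and> ennreal (r powr (s - \<epsilon>)) \<le> emeasure \<nu> (ball x r)"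
  proof
    fix x assume xK: "x \<in> K"
    obtain \<mu> where mu: "\<mu> \<in> \<Delta>" "lower_local_dim \<mu> x \<le> ereal t" using ld xK by blast
    have bpm: "sets \<mu> = sets borel \<and> prob_space \<mu> \<and> emeasure \<mu> (UNIV - K) = 0"
      using bp mu(1) unfolding borel_prob_supported_in_def by (rule bspec)
    have sb: "sets \<mu> = sets borel" using bpm by (rule conjunct1)
    have ps: "prob_space \<mu>" by (rule conjunct1[OF conjunct2[OF bpm]])
    obtain r where r: "0 < r" "r < \<rho>" "r powr (t + \<epsilon>) \<le> measure \<mu> (ball x r)"
      using find_radius[OF sb ps mu(2) tl rho(1) rho(2)] by blast
    have reta: "0 < r \<and> r < \<eta>" using r(1,2) rho(3) by linarith
    have dx: "\<forall>x\<in>K. \<exists>\<nu>\<in>E. ennreal (r powr \<epsilon>) * emeasure \<mu> (ball x r) \<le> emeasure \<nu> (ball x r)"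
      by (rule mp[OF spec[OF bspec[OF dens mu(1)]] reta])
    obtain \<nu> where nu: "\<nu> \<in> E" "ennreal (r powr \<epsilon>) * emeasure \<mu> (ball x r) \<le> emeasure \<nu> (ball x r)"
      using bspec[OF dx xK] by blast
    have "emeasure \<mu> (ball x r) = ennreal (measure \<mu> (ball x r))"
      by (rule finite_measure.emeasure_eq_measure[OF prob_space.finite_measure[OF ps]])
    then have "ennreal (r powr \<epsilon>) * emeasure \<mu> (ball x r) = ennreal (r powr \<epsilon> * measure \<mu> (ball x r))"
      by (simp add: ennreal_mult')
    moreover have "r powr (s - \<epsilon>) \<le> r powr \<epsilon> * measure \<mu> (ball x r)"
    proof -
      have "r powr (s - \<epsilon>) = r powr \<epsilon> * r powr (t + \<epsilon>)"
        unfolding ee by (rule powr_add)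
      also have "\<dots> \<le> r powr \<epsilon> * measure \<mu> (ball x r)" using r by (intro mult_left_mono) auto
      finally show ?thesis .
    qed
    ultimately have "ennreal (r powr (s - \<epsilon>)) \<le> ennreal (r powr \<epsilon>) * emeasure \<mu> (ball x r)"
      by (simp add: ennreal_leI)
    then have "ennreal (r powr (s - \<epsilon>)) \<le> emeasure \<nu> (ball x r)"
      using nu(2) by (rule order_trans)
    then show "\<exists>r \<nu>. 0 < r \<and> r < \<rho> \<and> \<nu> \<in> E \<and> ennreal (r powr (s - \<epsilon>)) \<le> emeasure \<nu> (ball x r)"
      using r nu by blast
  qed
  obtain R where R: "\<forall>x\<in>K. \<exists>\<nu>. 0 < R x \<and> R x < \<rho> \<and> \<nu> \<in> E \<and> ennreal (R x powr (s - \<epsilon>)) \<le> emeasure \<nu> (ball x (R x))"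
    using bchoice[OF pick] by blast
  obtain N where N: "\<forall>x\<in>K. 0 < R x \<and> R x < \<rho> \<and> N x \<in> E \<and> ennreal (R x powr (s - \<epsilon>)) \<le> emeasure (N x) (ball x (R x))"
    using bchoice[OF R] by blast
  have RN: "0 < R x \<and> R x < \<rho> \<and> N x \<in> E \<and> ennreal (R x powr (s - \<epsilon>)) \<le> emeasure (N x) (ball x (R x))"
    if "x \<in> K" for x using N that by (rule bspec)
  have opn: "\<And>T. T \<in> K \<Longrightarrow> open (ball T (R T))" by simp
  have cov: "K \<subseteq> (\<Union>x\<in>K. ball x (R x))"
  proof
    fix x assume xK: "x \<in> K"
    then have "x \<in> ball x (R x)" using RN[OF xK] by simp
    then show "x \<in> (\<Union>x\<in>K. ball x (R x))" using xK by blast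
  qed
  obtain F where F: "F \<subseteq> K" "finite F" "K \<subseteq> (\<Union>x\<in>F. ball x (R x))"
    by (rule compactE_image[OF cK opn cov])
  have S': "K \<subseteq> (\<Union>i\<in>F. ball (id i) (R i))" using F(3) by simp
  have r': "0 < R i \<and> R i \<le> \<rho>" if "i \<in> F" for i
    using RN[of i] that F(1) by auto
  obtain C0 where C0: "countable C0" "C0 \<subseteq> F" "pairwise (\<lambda>i j. disjnt (ball (id i) (R i)) (ball (id j) (R j))) C0"
     "K \<subseteq> (\<Union>i\<in>C0. ball (id i) (5 * R i))"
    by (rule Vitali_covering_lemma_balls[OF S' r'])
  obtain C where C: "C \<subseteq> F" "pairwise (\<lambda>i j. disjnt (ball i (R i)) (ball j (R j))) C"
     "K \<subseteq> (\<Union>i\<in>C. ball i (5 * R i))"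
    using C0 by simp
  have Cfin: "finite C" using C(1) F(2) finite_subset by blast
  have CK: "\<And>x. x \<in> C \<Longrightarrow> x \<in> K" using C(1) F(1) by blast
  have "hausdorff_pre s \<delta> K \<le> (\<Sum>x\<in>C. ennreal ((10 * R x) powr s))"
  proof (rule cover_bound[OF Cfin])
    fix x assume "x \<in> C"
    then have "0 < R x" "R x < \<rho>" using RN CK by auto
    then show "0 < R x \<and> 10 * R x \<le> \<delta>" using rho(4) by linarith
  qed (use C(3) dpos in auto)
  also have "\<dots> \<le> (\<Sum>x\<in>C. ennreal k * emeasure (N x) (ball x (R x)))"
  proof (rule sum_mono)
    fix x assume "x \<in> C"
    then have x: "0 < R x" "R x < \<rho>" "ennreal (R x powr (s - \<epsilon>)) \<le> emeasure (N x) (ball x (R x))"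
      using RN CK by auto
    have "(10 * R x) powr s = 10 powr s * (R x powr \<epsilon> * R x powr (s - \<epsilon>))"
      using x by (simp add: powr_mult powr_add[symmetric])
    also have "\<dots> \<le> 10 powr s * (\<rho> powr \<epsilon> * R x powr (s - \<epsilon>))"
      using x epos by (intro mult_left_mono mult_right_mono powr_mono2) auto
    also have "\<dots> = k * R x powr (s - \<epsilon>)" by (simp add: k_def)
    finally have "ennreal ((10 * R x) powr s) \<le> ennreal (k * R x powr (s - \<epsilon>))"
      by (rule ennreal_leI)
    also have "\<dots> = ennreal k * ennreal (R x powr (s - \<epsilon>))"
      by (rule ennreal_mult[OF k0]) simp
    also have "\<dots> \<le> ennreal k * emeasure (N x) (ball x (R x))"
      using x(3) by (rule mult_left_mono) simp
    finally show "ennreal ((10 * R x) powr s) \<le> ennreal k * emeasure (N x) (ball x (R x))" .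
  qed
  also have "\<dots> = ennreal k * (\<Sum>x\<in>C. emeasure (N x) (ball x (R x)))"
    by (simp add: sum_distrib_left)
  also have "\<dots> \<le> ennreal k * M"
    unfolding M_def
    by (intro mult_left_mono group_bound[OF Cfin]) (use RN CK sE C(2) in auto)
  also have "\<dots> = ennreal (k * m)" using Mm k0 by (simp add: ennreal_mult)
  also have "\<dots> \<le> ennreal c" using km by (rule ennreal_leI)
  finally show ?thesis .
qed



theorem propositionp:
  fixes K :: "'a::euclidean_space set" and \<Delta> :: "'a measure set" and t :: real
  assumes "compact K" and "K \<noteq> {}"
    and "uniform_densities K \<Delta>"
    and "\<forall>x\<in>K. \<exists>\<mu>\<in>\<Delta>. lower_local_dim \<mu> x \<le> ereal t"
  shows "hausdorff_dim K \<le> ereal t"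
proof -
  obtain x0 where x0: "x0 \<in> K" using assms(2) by blast
  obtain \<mu> where mu: "\<mu> \<in> \<Delta>" "lower_local_dim \<mu> x0 \<le> ereal t" using assms(4) x0 by blast
  have bp: "\<forall>\<mu>\<in>\<Delta>. borel_prob_supported_in K \<mu>"
    using conjunct1[OF assms(3)[unfolded uniform_densities_def]] .
  have "borel_prob_supported_in K \<mu>" using bp mu(1) by (rule bspec)
  then have ps: "prob_space \<mu>" unfolding borel_prob_supported_in_def by (rule conjunct1[OF conjunct2])
  have "0 \<le> lower_local_dim \<mu> x0" by (rule lower_local_dim_nonneg[OF ps])
  then have "ereal 0 \<le> ereal t" using mu(2) zero_ereal_def by (metis order_trans)
  then have t0: "0 \<le> t" by simp
  have H0: "hausdorff_measure s K = 0" if ts: "t < s" for s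
  proof -
    have "hausdorff_pre s \<delta> K = 0" if dpos: "0 < \<delta>" for \<delta>
    proof -
      have "hausdorff_pre s \<delta> K \<le> 0"
      proof (rule ennreal_le_epsilon)
        fix e :: real assume "0 < e"
        then have "hausdorff_pre s \<delta> K \<le> ennreal e"
          by (rule key[OF assms(1) assms(3) assms(4) ts dpos])
        then show "hausdorff_pre s \<delta> K \<le> 0 + ennreal e" by simp
      qed
      then show ?thesis by simp
    qed
    then have "(SUP \<delta>\<in>{0<..}. hausdorff_pre s \<delta> K) \<le> 0"
      by (intro SUP_least) simp
    then show ?thesis unfolding hausdorff_measure_def by simp
  qed
  show ?thesis unfolding hausdorff_dim_def
  proof (rule ereal_le_epsilon2)
    fix e :: real assume e: "0 < e"
    have "ereal (t + e) \<in> {ereal s | s. 0 \<le> s \<and> hausdorff_measure s K = 0}"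
      using t0 e H0[of "t + e"] by auto
    then have "Inf {ereal s | s. 0 \<le> s \<and> hausdorff_measure s K = 0} \<le> ereal (t + e)"
      by (rule Inf_lower)
    then show "Inf {ereal s | s. 0 \<le> s \<and> hausdorff_measure s K = 0} \<le> ereal t + ereal e" by simp
  qed
qed

end
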